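(* (i) If $d$ is large enough, then for every $i\in\{1,\dots,k+1\}$ and every $y\in C_{i-1}$, $D_i(y)\subset B(y,r_i)\cap C_i$. (ii) For $d$ large enough: let $x_0\in D_0$; if there exist $X_1,\dots,X_k\in\chi_1$ and $X_{k+1}\in\chi_\rho$ such that $X_1\in D_1(x_0)$ and $X_i\in D_i(X_{i-1})$ for $2\le i\le k+1$, then the event $\mathcal G^+(x_0)$ occurs.
   Context: Fix $\rho>1$, an integer $k\ge1$, $\kappa\in(\kappa^c_\rho(k),1)$, and $(a_i)_{2\le i\le k+1}\in(0,1)^k$ satisfying $1<\kappa^{k+1}\frac{(1+\rho)^2}{4\rho}\sqrt{\prod_{2\le j\le k+1}(1-a_j^2)}<\kappa\frac{d_{k+1}}{2\rho}$, where $r_1=r_{k+1}=1+\rho$, $r_i=2$ for $2\le i\le k$, $d_1=1+\rho$, $d_i^2=d_{i-1}^2+2r_ia_id_{i-1}+r_i^2$ ($d_i>0$), and $\kappa^c_\rho(k)=\inf_{0\le a_i<1}\max\big((4\rho/((1+\rho)^2\sqrt{\prod_{2\le i\le k+1}(1-a_i^2)}))^{1/(k+1)},\,2\rho/d_{k+1}\big)$. For $d\ge3$ let $v_d$ be the volume of the unit ball of $\mathbb{R}^d$, $B(y,r)$ the open ball in $\mathbb{R}^d$, $B''(c,r)$ the open ball in $\mathbb{R}^{d-2}$, and write $x=(x',x'')\in\mathbb{R}^2\times\mathbb{R}^{d-2}$. Let $\chi_1,\chi_\rho$ be independent homogeneous Poisson point processes on $\mathbb{R}^d$ with intensities $\kappa^d/(v_d2^d)$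 and $\kappa^d/(v_d2^d\rho^d)$. Sets: $D'_0=(-d^{-1/2},d^{-1/2})\times(-d^{-1/2},0)$, $D'_i=(0,d^{-1/2})^2$ for $1\le i\le k+1$; $C''_0=\{0\}$, $C''_i=B''(0,d_i-2d^{-1})\setminus B''(0,d_i-3d^{-1})$ for $1\le i\le k+1$; $C_i=D'_i\times C''_i$. For $2\le i\le k+1$ and $d$ large, $\theta_i\in(0,\pi/2)$ is defined by $\cos\theta_i=\frac{d_{i-1}+a_ir_i}{d_i}+d^{-1/2}$. For $y\in C_{i-1}$: $D''_i(y'')=\{z''\in C''_i:\langle z'',y''\rangle\ge\|y''\|\|z''\|\cos\theta_i\}$ for $2\le i\le k+1$, $D''_1(y'')=C''_1$, and $D_i(y)=D'_i\times D''_i(y'')$; $D_0=D'_0\times C''_0$. Event: with $W^+=d^{-1/2}((0,1)\times(0,1)\times\mathbb{R}^{d-2})$, for $x_0\in D_0$, $\mathcal G^+(x_0)$ is the event that there exist distinct $x_1,\dots,x_k\in\chi_1\cap W^+$ and $x_{k+1}\in\chi_\rho\cap W^+$ with $\|x_1-x_0\|<1+\rho$, $\|x_{i+1}-x_i\|<2$ for $1\le i\le k-1$, and $\|x_{k+1}-x_k\|<1+\rho$. *)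

theory Defs
  imports Complex_Main
begin

text \<open>Points of R^d are represented as functions nat => real vanishing at indices >= d.
  Coordinates 0,1 form x' and coordinates 2..d-1 form x''.\<close>

definition Rd :: "nat \<Rightarrow> (nat \<Rightarrow> real) set" where
  "Rd d = {x. \<forall>j\<ge>d. x j = 0}"

definition nrm :: "nat \<Rightarrow> (nat \<Rightarrow> real) \<Rightarrow> real" where
  "nrm d x = sqrt (\<Sum>j<d. (x j)^2)"

definition nrm2 :: "nat \<Rightarrow> (nat \<Rightarrow> real) \<Rightarrow> real" where
  "nrm2 d x = sqrt (\<Sum>j\<in>{2..<d}. (x j)^2)"

definition inner2 :: "nat \<Rightarrow> (nat \<Rightarrow> real) \<Rightarrow> (nat \<Rightarrow> real) \<Rightarrow> real" where
  "inner2 d x z = (\<Sum>j\<in>{2..<d}. x j * z j)"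

definition Bd :: "nat \<Rightarrow> (nat \<Rightarrow> real) \<Rightarrow> real \<Rightarrow> (nat \<Rightarrow> real) set" where
  "Bd d y r = {x \<in> Rd d. nrm d (x - y) < r}"

definition rr :: "real \<Rightarrow> nat \<Rightarrow> nat \<Rightarrow> real" where
  "rr \<rho> k i = (if i = 1 \<or> i = k + 1 then 1 + \<rho> else 2)"

text \<open>d_i (i >= 1); the value at index 0 is irrelevant\<close>
fun dd :: "real \<Rightarrow> nat \<Rightarrow> (nat \<Rightarrow> real) \<Rightarrow> nat \<Rightarrow> real" where
  "dd \<rho> k a 0 = 0"
| "dd \<rho> k a (Suc 0) = 1 + \<rho>"
| "dd \<rho> k a (Suc (Suc n)) =
     sqrt ((dd \<rho> k a (Suc n))^2 + 2 * rr \<rho> k (Suc (Suc n)) * a (Suc (Suc n)) * dd \<rho> k a (Suc n)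
           + (rr \<rho> k (Suc (Suc n)))^2)"

definition kappa_c :: "real \<Rightarrow> nat \<Rightarrow> real" where
  "kappa_c \<rho> k = (INF a \<in> {a. \<forall>i\<in>{2..k+1}. 0 \<le> a i \<and> a i < 1}.
      max ((4 * \<rho> / ((1 + \<rho>)^2 * sqrt (\<Prod>i\<in>{2..k+1}. 1 - (a i)^2))) powr (1 / real (k + 1)))
          (2 * \<rho> / dd \<rho> k a (k + 1)))"

text \<open>D'_0 and D'_i as conditions on the first two coordinates\<close>
definition Dp0 :: "nat \<Rightarrow> (nat \<Rightarrow> real) set" where
  "Dp0 d = {x. - 1 / sqrt d < x 0 \<and> x 0 < 1 / sqrt d \<and> - 1 / sqrt d < x 1 \<and> x 1 < 0}"

definition Dp :: "nat \<Rightarrow> (nat \<Rightarrow> real) set" where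
  "Dp d = {x. 0 < x 0 \<and> x 0 < 1 / sqrt d \<and> 0 < x 1 \<and> x 1 < 1 / sqrt d}"

definition CC :: "real \<Rightarrow> nat \<Rightarrow> (nat \<Rightarrow> real) \<Rightarrow> nat \<Rightarrow> nat \<Rightarrow> (nat \<Rightarrow> real) set" where
  "CC \<rho> k a d i =
     (if i = 0 then {x \<in> Rd d. x \<in> Dp0 d \<and> (\<forall>j\<in>{2..<d}. x j = 0)}
      else {x \<in> Rd d. x \<in> Dp d \<and> dd \<rho> k a i - 3 / d \<le> nrm2 d x \<and> nrm2 d x < dd \<rho> k a i - 2 / d})"

definition costh :: "real \<Rightarrow> nat \<Rightarrow> (nat \<Rightarrow> real) \<Rightarrow> nat \<Rightarrow> nat \<Rightarrow> real" where
  "costh \<rho> k a d i = (dd \<rho> k a (i - 1) + a i * rr \<rho> k i) / dd \<rho> k a i + 1 / sqrt d"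

definition DD :: "real \<Rightarrow> nat \<Rightarrow> (nat \<Rightarrow> real) \<Rightarrow> nat \<Rightarrow> nat \<Rightarrow> (nat \<Rightarrow> real) \<Rightarrow> (nat \<Rightarrow> real) set" where
  "DD \<rho> k a d i y =
     (if i \<le> 1 then CC \<rho> k a d i
      else {z \<in> CC \<rho> k a d i. inner2 d z y \<ge> nrm2 d y * nrm2 d z * costh \<rho> k a d i})"

definition Wplus :: "nat \<Rightarrow> (nat \<Rightarrow> real) set" where
  "Wplus d = {x \<in> Rd d. x \<in> Dp d}"

text \<open>the event G^+(x_0) for a realization (S1, Srho) of (chi_1, chi_rho)\<close>
definition Gplus :: "real \<Rightarrow> nat \<Rightarrow> nat \<Rightarrow> (nat \<Rightarrow> real) set \<Rightarrow> (nat \<Rightarrow> real) set \<Rightarrow> (nat \<Rightarrow> real) \<Rightarrow> bool" where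
  "Gplus \<rho> k d S1 Srho x0 =
     (\<exists>x :: nat \<Rightarrow> (nat \<Rightarrow> real).
        (\<forall>i\<in>{1..k}. x i \<in> S1 \<inter> Wplus d) \<and> x (k + 1) \<in> Srho \<inter> Wplus d \<and>
        inj_on x {1..k+1} \<and>
        nrm d (x 1 - x0) < 1 + \<rho> \<and>
        (\<forall>i\<in>{1..k-1}. nrm d (x (i + 1) - x i) < 2) \<and>
        nrm d (x (k + 1) - x k) < 1 + \<rho>)"

end

theory Submission
  imports Defs
begin



lemma rr_pos: "\<rho> > 1 \<Longrightarrow> rr \<rho> k i \<ge> 2"
  by (simp add: rr_def)

lemma dd_SS: "dd \<rho> k a (Suc (Suc n)) = sqrt ((dd \<rho> k a (Suc n))^2 + 2 * rr \<rho> k (Suc (Suc n)) * a (Suc (Suc n)) * dd \<rho> k a (Suc n)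
           + (rr \<rho> k (Suc (Suc n)))^2)" by simp

lemma dd_ge:
  assumes r: "\<rho> > 1" and a: "\<forall>i\<in>{2..k+1}. 0 < a i \<and> a i < 1"
  shows "1 \<le> i \<Longrightarrow> i \<le> k+1 \<Longrightarrow> dd \<rho> k a i \<ge> 1+\<rho>"
proof (induction i)
  case 0 then show ?case by simp
next
  case (Suc i)
  show ?case
  proof (cases i)
    case 0 then show ?thesis by simp
  next
    case (Suc m)
    have D: "dd \<rho> k a (Suc m) \<ge> 1 + \<rho>" using Suc.IH Suc.prems \<open>i = Suc m\<close> by simp
    have am: "a (Suc (Suc m)) > 0" using a Suc.prems \<open>i = Suc m\<close> by auto
    have rp: "rr \<rho> k (Suc (Suc m)) \<ge> 2" using r by (simp add: rr_def)
    have "(dd \<rho> k a (Suc m))^2 \<le> (dd \<rho> k a (Suc m))^2 + 2 * rr \<rho> k (Suc (Suc m)) * a (Suc (Suc m)) * dd \<rho> k a (Suc m)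
           + (rr \<rho> k (Suc (Suc m)))^2" using D am rp r by (simp add: zero_le_mult_iff)
    then have "sqrt ((dd \<rho> k a (Suc m))^2) \<le> dd \<rho> k a (Suc (Suc m))"
      by (simp only: dd_SS real_sqrt_le_iff)
    then show ?thesis using D r \<open>i = Suc m\<close> by simp
  qed
qed

lemma dd_sq:
  assumes r: "\<rho> > 1" and a: "\<forall>i\<in>{2..k+1}. 0 < a i \<and> a i < 1"
    and i: "2 \<le> i" "i \<le> k+1"
  shows "(dd \<rho> k a i)^2 = (dd \<rho> k a (i-1))^2 + 2 * rr \<rho> k i * a i * dd \<rho> k a (i-1) + (rr \<rho> k i)^2"
proof -
  obtain m where m: "i = Suc (Suc m)" using i by (metis add_2_eq_Suc le_Suc_ex)
  have D: "dd \<rho> k a (Suc m) \<ge> 1 + \<rho>" using dd_ge[OF r a, of "Suc m"] i m by simp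
  have am: "a (Suc (Suc m)) > 0" using a i m by auto
  have rp: "rr \<rho> k (Suc (Suc m)) \<ge> 2" using r by (simp add: rr_def)
  have "0 \<le> (dd \<rho> k a (Suc m))^2 + 2 * rr \<rho> k (Suc (Suc m)) * a (Suc (Suc m)) * dd \<rho> k a (Suc m)
           + (rr \<rho> k (Suc (Suc m)))^2" using D am rp r by (simp add: zero_le_mult_iff)
  then show ?thesis using m by simp
qed

lemma dd_mono_step:
  assumes r: "\<rho> > 1" and a: "\<forall>i\<in>{2..k+1}. 0 < a i \<and> a i < 1"
    and i: "2 \<le> i" "i \<le> k+1"
  shows "dd \<rho> k a (i-1) < dd \<rho> k a i"
    and "(dd \<rho> k a i - dd \<rho> k a (i-1)) * (dd \<rho> k a i + dd \<rho> k a (i-1)) \<ge> 4"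
proof -
  have D: "dd \<rho> k a (i-1) \<ge> 1 + \<rho>" using dd_ge[OF r a, of "i-1"] i by simp
  have D2: "dd \<rho> k a i \<ge> 1 + \<rho>" using dd_ge[OF r a, of "i"] i by simp
  have am: "a i > 0" using a i by auto
  have rp: "rr \<rho> k i \<ge> 2" using r by (simp add: rr_def)
  have sq: "(dd \<rho> k a i)^2 = (dd \<rho> k a (i-1))^2 + 2 * rr \<rho> k i * a i * dd \<rho> k a (i-1) + (rr \<rho> k i)^2"
    by (rule dd_sq[OF r a i])
  have "(rr \<rho> k i)^2 \<ge> 4" proof -
    have "2*2 \<le> rr \<rho> k i * rr \<rho> k i" using rp by (intro mult_mono) auto
    then show ?thesis by (simp add: power2_eq_square)
  qed
  moreover have "2 * rr \<rho> k i * a i * dd \<rho> k a (i-1) \<ge> 0" using D am rp r by (simp add: zero_le_mult_iff)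
  ultimately have "(dd \<rho> k a i)^2 - (dd \<rho> k a (i-1))^2 \<ge> 4" using sq by linarith
  then show "(dd \<rho> k a i - dd \<rho> k a (i-1)) * (dd \<rho> k a i + dd \<rho> k a (i-1)) \<ge> 4"
    by (simp add: power2_eq_square algebra_simps)
  then show "dd \<rho> k a (i-1) < dd \<rho> k a i" using D D2 r
    by (smt (verit) mult_nonpos_nonneg)
qed



lemma key2:
  fixes A B r a s ny nz ip p M :: real
  assumes A: "A \<ge> 2" "A \<le> M" and B: "B \<ge> 2" "B \<le> M" and r: "r > 0" and a: "0 < a" "a < 1"
    and BB: "B^2 = A^2 + 2*r*a*A + r^2" and s: "s > 1 + 6*M"
    and ny: "A - 3/s^2 \<le> ny" "ny < A" and nz: "B - 3/s^2 \<le> nz" "nz < B"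
    and ip: "ip \<ge> ny*nz*((A + a*r)/B + 1/s)" and p: "p < 2/s^2"
  shows "p + nz^2 + ny^2 - 2*ip < r^2"
proof -
  define c where "c = (A + a*r)/B"
  have spos: "s > 13" using s A by linarith
  have "(A + a*r)^2 \<le> B^2"
  proof -
    have "(a*r)^2 \<le> r^2" using a r by (simp add: power_mult_distrib mult_le_cancel_right1 power_le_one)
    then show ?thesis using BB by (simp add: power2_eq_square algebra_simps)
  qed
  then have "A + a*r \<le> B" using B(1) by (intro power2_le_imp_le[of "A+a*r" B]) auto
  then have c: "0 < c" "c \<le> 1" proof -
    have "A + a*r > 0" using A a r by (simp add: add_pos_pos)
    then show "0 < c" using B by (simp add: c_def)
    show "c \<le> 1" using \<open>A + a*r \<le> B\<close> B by (simp add: c_def)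
  qed
  have e: "3/s^2 \<le> 1"
  proof -
    have "s^2 \<ge> 3" proof -
      have "13*13 \<le> s*s" using spos by (intro mult_mono) auto
      then show ?thesis by (simp add: power2_eq_square)
    qed
    then show ?thesis by (simp add: divide_le_eq)
  qed
  have ny0: "ny \<ge> A/2" "ny \<ge> 0" using ny A e by linarith+
  have nz0: "nz \<ge> B/2" "nz \<ge> 0" using nz B e by linarith+
  have f1: "ny^2 < A^2" using ny ny0 by (simp add: power_strict_mono)
  have f2: "nz^2 < B^2" using nz nz0 by (simp add: power_strict_mono)
  have prod1: "ny*nz \<ge> A*B - 3*(A+B)/s^2"
  proof -
    have "ny*nz \<ge> (A - 3/s^2)*(B - 3/s^2)" using ny nz A B e by (intro mult_mono) auto
    moreover have "(A - 3/s^2)*(B - 3/s^2) \<ge> A*B - 3*(A+B)/s^2"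
      by (simp add: algebra_simps add_divide_distrib)
    ultimately show ?thesis by linarith
  qed
  have prod2: "ny*nz \<ge> 1"
  proof -
    have "ny*nz \<ge> 1*1" using ny0 nz0 A B by (intro mult_mono) auto
    then show ?thesis by simp
  qed
  define P where "P = ny*nz"
  define Q where "Q = c*(A+B)/s^2"
  have f3: "ip \<ge> c*P + P/s" using ip by (simp add: c_def P_def algebra_simps add_divide_distrib)
  have g1: "c * (A*B - 3*(A+B)/s^2) \<le> c * P" using prod1 c unfolding P_def by (intro mult_left_mono) auto
  have g2: "c * (A*B - 3*(A+B)/s^2) = A*B*c - 3*Q" by (simp add: Q_def algebra_simps)
  have g3: "A*B*c = A*(A+a*r)" using B by (simp add: c_def)
  have f4: "c*P \<ge> A*(A+a*r) - 3*Q" using g1 g2 g3 by linarith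
  have cab: "c*(A+B) \<le> 2*M" proof -
    have "c*(A+B) \<le> A+B" using c A B by (intro mult_left_le_one_le[of "A+B" c]) auto
    then show ?thesis using A B by linarith
  qed
  have f5: "Q \<le> 2*M/s^2" unfolding Q_def using cab by (simp add: divide_right_mono)
  have f6: "1/s \<le> P/s" using prod2 spos unfolding P_def by (simp add: divide_right_mono)
  have f7: "B^2 + A^2 - 2*(A*(A+a*r)) = r^2" using BB by (simp add: algebra_simps power2_eq_square)
  have h1: "p + nz^2 + ny^2 - 2*ip < r^2 + (2/s^2 + 6*(2*M/s^2) - 2/s)"
    using p f1 f2 f3 f4 f5 f6 f7 by linarith
  have h2: "2/s^2 + 6*(2*M/s^2) - 2/s = (2 + 12*M - 2*s)/s^2"
    using spos by (simp add: field_simps power2_eq_square)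
  have h3: "(2 + 12*M - 2*s)/s^2 < 0" using s spos by (simp add: divide_neg_pos)
  show ?thesis using h1 h2 h3 by linarith
qed



lemma nrm_sq: "(nrm d v)^2 = (\<Sum>j<d. (v j)^2)"
  unfolding nrm_def by (simp add: sum_nonneg)

lemma nrm2_sq: "(nrm2 d v)^2 = (\<Sum>j\<in>{2..<d}. (v j)^2)"
  unfolding nrm2_def by (simp add: sum_nonneg)

lemma nrm_split: "d \<ge> 2 \<Longrightarrow> (nrm d v)^2 = (v 0)^2 + (v 1)^2 + (nrm2 d v)^2"
proof -
  assume d: "d \<ge> 2"
  have "(\<Sum>j<d. (v j)^2) = (\<Sum>j\<in>{0..<2}. (v j)^2) + (\<Sum>j\<in>{2..<d}. (v j)^2)"
    using d by (simp add: sum.atLeastLessThan_concat atLeast0LessThan[symmetric])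
  also have "(\<Sum>j\<in>{0..<2}. (v j)^2) = (v 0)^2 + (v 1)^2" by (simp add: numeral_2_eq_2)
  finally show ?thesis by (simp add: nrm_sq nrm2_sq)
qed

lemma nrm2_diff: "(nrm2 d (z - y))^2 = (nrm2 d z)^2 + (nrm2 d y)^2 - 2 * inner2 d z y"
  by (simp add: nrm2_sq inner2_def power2_diff sum.distrib sum_subtractf sum_distrib_left algebra_simps)

lemma nrm_nonneg: "nrm d v \<ge> 0" by (simp add: nrm_def sum_nonneg)
lemma nrm2_nonneg: "nrm2 d v \<ge> 0" by (simp add: nrm2_def sum_nonneg)

lemma sq_lt: "\<bar>x::real\<bar> < b \<Longrightarrow> x^2 < b^2"
proof -
  assume h: "\<bar>x\<bar> < b"
  have "\<bar>x\<bar>^2 < b^2" using h by (intro power_strict_mono) auto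
  then show ?thesis by simp
qed

lemma inBd: "z \<in> Rd d \<Longrightarrow> r > 0 \<Longrightarrow> (nrm d (z - y))^2 < r^2 \<Longrightarrow> z \<in> Bd d y r"
  unfolding Bd_def using nrm_nonneg[of d "z - y"]
  by (auto intro: power2_less_imp_less)

lemma key1:
  fixes D u0 u1 nz e :: real
  assumes "u0 < 4*e" "u1 < 4*e" "D - 3*e \<le> nz" "nz < D - 2*e" "e \<le> D - 2" "e \<le> 1/2" "e > 0" "D > 2"
  shows "u0 + u1 + nz^2 < D^2"
proof -
  have nz0: "nz \<ge> 0" using assms by linarith
  have "nz^2 < (D - 2*e)^2" using nz0 assms by (intro power_strict_mono) auto
  moreover have "(D - 2*e)^2 = D^2 - 8*e - 4*e*(D - 2 - e)" by (simp add: power2_eq_square algebra_simps)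
  moreover have "4*e*(D - 2 - e) \<ge> 0" using assms by simp
  ultimately show ?thesis using assms by linarith
qed




lemma dd_mono:
  assumes r: "\<rho> > 1" and a: "\<forall>i\<in>{2..k+1}. 0 < a i \<and> a i < 1"
  shows "1 \<le> i \<Longrightarrow> i \<le> j \<Longrightarrow> j \<le> k+1 \<Longrightarrow> dd \<rho> k a i \<le> dd \<rho> k a j"
proof (induction j)
  case 0 then show ?case by simp
next
  case (Suc j)
  show ?case
  proof (cases "i = Suc j")
    case True then show ?thesis by simp
  next
    case False
    then have "i \<le> j" using Suc.prems by simp
    then have "dd \<rho> k a i \<le> dd \<rho> k a j" using Suc by simp
    moreover have "dd \<rho> k a (Suc j - 1) < dd \<rho> k a (Suc j)"
      using dd_mono_step(1)[OF r a, of "Suc j"] Suc.prems \<open>i \<le> j\<close> by simp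
    ultimately show ?thesis by simp
  qed
qed

lemma dd_gap:
  assumes r: "\<rho> > 1" and a: "\<forall>i\<in>{2..k+1}. 0 < a i \<and> a i < 1"
    and i: "1 \<le> i" "i < j" "j \<le> k+1"
  shows "dd \<rho> k a j - dd \<rho> k a i \<ge> 2 / dd \<rho> k a (k+1)"
proof -
  define M where "M = dd \<rho> k a (k+1)"
  have st: "(dd \<rho> k a (Suc i) - dd \<rho> k a i) * (dd \<rho> k a (Suc i) + dd \<rho> k a i) \<ge> 4"
    using dd_mono_step(2)[OF r a, of "Suc i"] i by simp
  have m1: "dd \<rho> k a (Suc i) \<le> M" unfolding M_def using dd_mono[OF r a, of "Suc i" "k+1"] i by simp
  have m2: "dd \<rho> k a i \<le> M" unfolding M_def using dd_mono[OF r a, of i "k+1"] i by simp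
  have p2: "dd \<rho> k a i \<ge> 1 + \<rho>" using dd_ge[OF r a, of i] i by simp
  have g0: "dd \<rho> k a (Suc i) - dd \<rho> k a i > 0"
    using dd_mono_step(1)[OF r a, of "Suc i"] i by simp
  have "4 \<le> (dd \<rho> k a (Suc i) - dd \<rho> k a i) * (2*M)"
    using st g0 m1 m2 by (smt (verit) mult_left_mono)
  then have "2 \<le> (dd \<rho> k a (Suc i) - dd \<rho> k a i) * M" by (simp add: mult.commute)
  moreover have "M > 0" using p2 m2 r by simp
  ultimately have "2 / M \<le> dd \<rho> k a (Suc i) - dd \<rho> k a i"
    by (simp add: pos_divide_le_eq)
  moreover have "dd \<rho> k a (Suc i) \<le> dd \<rho> k a j" using dd_mono[OF r a, of "Suc i" j] i by simp
  ultimately show ?thesis unfolding M_def by simp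
qed



lemma partI:
  assumes r: "\<rho> > 1" and a: "\<forall>i\<in>{2..k+1}. 0 < a i \<and> a i < 1"
    and d2: "d \<ge> 2" and sd: "sqrt (real d) > 1 + 6 * dd \<rho> k a (k+1)"
    and ed: "1 / real d \<le> \<rho> - 1"
    and i: "i \<in> {1..k+1}" and y: "y \<in> CC \<rho> k a d (i-1)" and z: "z \<in> DD \<rho> k a d i y"
  shows "z \<in> Bd d y (rr \<rho> k i) \<inter> CC \<rho> k a d i"
proof -
  define s where "s = sqrt (real d)"
  have dpos: "real d > 0" using d2 by simp
  have ss: "s^2 = real d" unfolding s_def by simp
  have spos: "s > 0" unfolding s_def using dpos by simp
  have zC: "z \<in> CC \<rho> k a d i" using z by (cases "i \<le> 1") (auto simp: DD_def)
  have zR: "z \<in> Rd d" "z \<in> Dp d" and zn: "dd \<rho> k a i - 3 / d \<le> nrm2 d z" "nrm2 d z < dd \<rho> k a i - 2 / d"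
    using zC i by (auto simp: CC_def)
  have zd: "0 < z 0" "z 0 < 1/s" "0 < z 1" "z 1 < 1/s" using zR unfolding Dp_def s_def by auto
  have rpos: "rr \<rho> k i > 0" using r by (simp add: rr_def)
  have split: "(nrm d (z - y))^2 = (z 0 - y 0)^2 + (z 1 - y 1)^2 + ((nrm2 d z)^2 + (nrm2 d y)^2 - 2 * inner2 d z y)"
    using nrm_split[OF d2, of "z - y"] nrm2_diff[of d z y] by simp
  show ?thesis
  proof (cases "i = 1")
    case True
    have yC: "y \<in> Dp0 d" "\<forall>j\<in>{2..<d}. y j = 0" using y True by (auto simp: CC_def)
    have yd: "-1/s < y 0" "y 0 < 1/s" "-1/s < y 1" "y 1 < 0" using yC(1) unfolding Dp0_def s_def by auto
    have ny: "nrm2 d y = 0" using yC(2) unfolding nrm2_def by simp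
    have ip: "inner2 d z y = 0" using yC(2) unfolding inner2_def by simp
    have "\<bar>z 0 - y 0\<bar> < 2/s" using zd yd by (simp add: abs_less_iff)
    then have u0: "(z 0 - y 0)^2 < 4 * (1/real d)" using sq_lt ss by (fastforce simp: power_divide)
    have "\<bar>z 1 - y 1\<bar> < 2/s" using zd yd by (simp add: abs_less_iff)
    then have u1: "(z 1 - y 1)^2 < 4 * (1/real d)" using sq_lt ss by (fastforce simp: power_divide)
    have D1: "dd \<rho> k a i = 1 + \<rho>" using True by simp
    have "(z 0 - y 0)^2 + (z 1 - y 1)^2 + (nrm2 d z)^2 < (1+\<rho>)^2"
    proof (rule key1[OF u0 u1])
      show "1 + \<rho> - 3 * (1 / real d) \<le> nrm2 d z" using zn D1 by simp
      show "nrm2 d z < 1 + \<rho> - 2 * (1 / real d)" using zn D1 by simp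
      show "1 / real d \<le> 1 + \<rho> - 2" using ed by simp
      show "1 / real d \<le> 1/2" using d2 by (simp add: divide_le_eq)
      show "1 / real d > 0" using dpos by simp
      show "1 + \<rho> > 2" using r by simp
    qed
    then have "(nrm d (z - y))^2 < (rr \<rho> k i)^2" using split ny ip True by (simp add: rr_def)
    then show ?thesis using inBd[OF zR(1) rpos] zC by blast
  next
    case False
    then have i2: "2 \<le> i" "i \<le> k+1" using i by auto
    have yC: "y \<in> Dp d" "dd \<rho> k a (i-1) - 3 / d \<le> nrm2 d y" "nrm2 d y < dd \<rho> k a (i-1) - 2 / d"
      using y i2 by (auto simp: CC_def)
    have yd: "0 < y 0" "y 0 < 1/s" "0 < y 1" "y 1 < 1/s" using yC(1) unfolding Dp_def s_def by auto
    have ipz: "inner2 d z y \<ge> nrm2 d y * nrm2 d z * costh \<rho> k a d i"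
      using z i2 by (simp add: DD_def)
    have "\<bar>z 0 - y 0\<bar> < 1/s" using zd yd by (simp add: abs_less_iff)
    then have u0: "(z 0 - y 0)^2 < 1/s^2" using sq_lt by (fastforce simp: power_divide)
    have "\<bar>z 1 - y 1\<bar> < 1/s" using zd yd by (simp add: abs_less_iff)
    then have u1: "(z 1 - y 1)^2 < 1/s^2" using sq_lt by (fastforce simp: power_divide)
    define M where "M = dd \<rho> k a (k+1)"
    have A2: "dd \<rho> k a (i-1) \<ge> 2"
    proof -
      have "1 \<le> i-1" "i-1 \<le> k+1" using i2 by auto
      then have "dd \<rho> k a (i-1) \<ge> 1+\<rho>" by (rule dd_ge[OF r a])
      then show ?thesis using r by linarith
    qed
    have B2: "dd \<rho> k a i \<ge> 2" using dd_ge[OF r a, of "i"] i2 r by simp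
    have AM: "dd \<rho> k a (i-1) \<le> M" unfolding M_def using dd_mono[OF r a, of "i-1" "k+1"] i2 by simp
    have BM: "dd \<rho> k a i \<le> M" unfolding M_def using dd_mono[OF r a, of "i" "k+1"] i2 by simp
    have ai: "0 < a i" "a i < 1" using a i2 by auto
    have "(z 0 - y 0)^2 + (z 1 - y 1)^2 + (nrm2 d z)^2 + (nrm2 d y)^2 - 2 * inner2 d z y < (rr \<rho> k i)^2"
    proof (rule key2[OF A2 AM B2 BM rpos ai dd_sq[OF r a i2]])
      show "1 + 6 * M < s" using sd unfolding M_def s_def .
      show "dd \<rho> k a (i - 1) - 3 / s\<^sup>2 \<le> nrm2 d y" using yC ss by simp
      show "nrm2 d y < dd \<rho> k a (i - 1)" using yC dpos by (smt (verit) divide_pos_pos)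
      show "dd \<rho> k a i - 3 / s\<^sup>2 \<le> nrm2 d z" using zn ss by simp
      show "nrm2 d z < dd \<rho> k a i" using zn dpos by (smt (verit) divide_pos_pos)
      show "nrm2 d y * nrm2 d z * ((dd \<rho> k a (i - 1) + a i * rr \<rho> k i) / dd \<rho> k a i + 1 / s) \<le> inner2 d z y"
        using ipz unfolding costh_def s_def .
      show "(z 0 - y 0)^2 + (z 1 - y 1)^2 < 2 / s\<^sup>2" using u0 u1 by simp
    qed
    then have "(nrm d (z - y))^2 < (rr \<rho> k i)^2" using split by simp
    then show ?thesis using inBd[OF zR(1) rpos] zC by blast
  qed
qed



theorem lemma2p12:
  fixes \<rho> \<kappa> :: real and k :: nat and a :: "nat \<Rightarrow> real"
  assumes "\<rho> > 1" and "k \<ge> 1"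
    and "kappa_c \<rho> k < \<kappa>" and "\<kappa> < 1"
    and "\<forall>i\<in>{2..k+1}. 0 < a i \<and> a i < 1"
    and "1 < \<kappa>^(k+1) * (1 + \<rho>)^2 / (4 * \<rho>) * sqrt (\<Prod>j\<in>{2..k+1}. 1 - (a j)^2)"
    and "\<kappa>^(k+1) * (1 + \<rho>)^2 / (4 * \<rho>) * sqrt (\<Prod>j\<in>{2..k+1}. 1 - (a j)^2)
           < \<kappa> * dd \<rho> k a (k + 1) / (2 * \<rho>)"
  shows "(\<exists>d0. \<forall>d\<ge>d0. \<forall>i\<in>{1..k+1}. \<forall>y\<in>CC \<rho> k a d (i - 1).
            DD \<rho> k a d i y \<subseteq> Bd d y (rr \<rho> k i) \<inter> CC \<rho> k a d i)
       \<and> (\<exists>d0. \<forall>d\<ge>d0. \<forall>x0\<in>CC \<rho> k a d 0. \<forall>S1 Srho.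
            S1 \<subseteq> Rd d \<longrightarrow> Srho \<subseteq> Rd d \<longrightarrow>
            (\<exists>X :: nat \<Rightarrow> (nat \<Rightarrow> real).
               (\<forall>i\<in>{1..k}. X i \<in> S1) \<and> X (k + 1) \<in> Srho \<and>
               X 1 \<in> DD \<rho> k a d 1 x0 \<and>
               (\<forall>i\<in>{2..k+1}. X i \<in> DD \<rho> k a d i (X (i - 1))))
            \<longrightarrow> Gplus \<rho> k d S1 Srho x0)"
proof -
  note r = assms(1) and a = assms(5) and k1 = assms(2)
  define M where "M = dd \<rho> k a (k+1)"
  have Mge: "M \<ge> 1 + \<rho>" unfolding M_def using dd_ge[OF r a, of "k+1"] by simp
  define d0 where "d0 = nat \<lceil>(2 + 6*M)^2 + 1/(\<rho>-1)\<rceil> + 2"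
  have good: "d \<ge> 2 \<and> sqrt (real d) > 1 + 6 * M \<and> 1 / real d \<le> \<rho> - 1 \<and> 1 / real d < 2 / M"
    if "d \<ge> d0" for d
  proof -
    have "(2 + 6*M)^2 + 1/(\<rho>-1) \<le> real (nat \<lceil>(2 + 6*M)^2 + 1/(\<rho>-1)\<rceil>)" by linarith
    then have dge: "real d \<ge> (2 + 6*M)^2 + 1/(\<rho>-1) + 2" using that unfolding d0_def by linarith
    have d2: "d \<ge> 2" using that unfolding d0_def by simp
    have pos: "1/(\<rho>-1) > 0" using r by simp
    have sq: "(2 + 6*M)^2 \<ge> 2 + 6*M" using Mge r
      by (simp add: power2_eq_square)
    have "sqrt ((2 + 6*M)^2) \<le> sqrt (real d)" using dge pos by (intro real_sqrt_le_mono) linarith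
    then have s: "sqrt (real d) > 1 + 6*M" using Mge r by simp
    have "1/(\<rho>-1) \<le> real d" using dge by (smt (verit) zero_le_power2)
    then have e: "1 / real d \<le> \<rho> - 1" using r pos d2
      by (simp add: divide_le_eq mult.commute)
    have "M < 2 * real d" using dge sq pos Mge r by linarith
    then have "1 / real d < 2 / M" using Mge r d2 by (simp add: divide_less_eq field_simps)
    then show ?thesis using d2 s e by simp
  qed
  have P1: "\<forall>d\<ge>d0. \<forall>i\<in>{1..k+1}. \<forall>y\<in>CC \<rho> k a d (i - 1).
            DD \<rho> k a d i y \<subseteq> Bd d y (rr \<rho> k i) \<inter> CC \<rho> k a d i"
  proof (intro allI impI ballI subsetI)
    fix d i y z assume "d0 \<le> d" "i \<in> {1..k+1}" "y \<in> CC \<rho> k a d (i - 1)" "z \<in> DD \<rho> k a d i y"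
    then show "z \<in> Bd d y (rr \<rho> k i) \<inter> CC \<rho> k a d i"
      using partI[OF r a] good unfolding M_def by blast
  qed
  have P2: "\<forall>d\<ge>d0. \<forall>x0\<in>CC \<rho> k a d 0. \<forall>S1 Srho.
            S1 \<subseteq> Rd d \<longrightarrow> Srho \<subseteq> Rd d \<longrightarrow>
            (\<exists>X :: nat \<Rightarrow> (nat \<Rightarrow> real).
               (\<forall>i\<in>{1..k}. X i \<in> S1) \<and> X (k + 1) \<in> Srho \<and>
               X 1 \<in> DD \<rho> k a d 1 x0 \<and>
               (\<forall>i\<in>{2..k+1}. X i \<in> DD \<rho> k a d i (X (i - 1))))
            \<longrightarrow> Gplus \<rho> k d S1 Srho x0"
  proof (intro allI impI ballI)
    fix d x0 S1 Srho
    assume dd0: "d0 \<le> d" and x0: "x0 \<in> CC \<rho> k a d 0"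
    assume "\<exists>X :: nat \<Rightarrow> (nat \<Rightarrow> real).
               (\<forall>i\<in>{1..k}. X i \<in> S1) \<and> X (k + 1) \<in> Srho \<and>
               X 1 \<in> DD \<rho> k a d 1 x0 \<and>
               (\<forall>i\<in>{2..k+1}. X i \<in> DD \<rho> k a d i (X (i - 1)))"
    then obtain X where XS: "\<forall>i\<in>{1..k}. X i \<in> S1" "X (k + 1) \<in> Srho"
      and X1: "X 1 \<in> DD \<rho> k a d 1 x0" and Xi: "\<forall>i\<in>{2..k+1}. X i \<in> DD \<rho> k a d i (X (i - 1))"
      by blast
    have g: "d \<ge> 2" "sqrt (real d) > 1 + 6 * M" "1 / real d \<le> \<rho> - 1" "1 / real d < 2 / M"
      using good[OF dd0] by auto
    have DDC: "\<And>i y. DD \<rho> k a d i y \<subseteq> CC \<rho> k a d i" by (auto simp: DD_def)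
    have XC: "X i \<in> CC \<rho> k a d i" if "i \<in> {1..k+1}" for i
    proof (cases "i = 1")
      case True then show ?thesis using X1 DDC by auto
    next
      case False then have "i \<in> {2..k+1}" using that by auto
      then show ?thesis using Xi DDC by blast
    qed
    have XB: "X i \<in> Bd d (X (i-1)) (rr \<rho> k i)" if "i \<in> {2..k+1}" for i
    proof -
      have "i-1 \<in> {1..k+1}" using that by auto
      then have "X (i-1) \<in> CC \<rho> k a d (i-1)" by (rule XC)
      moreover have "X i \<in> DD \<rho> k a d i (X (i - 1))" using Xi that by blast
      ultimately show ?thesis using partI[OF r a g(1) g(2)[unfolded M_def] g(3), of i] that by auto
    qed
    have XB1: "X 1 \<in> Bd d x0 (rr \<rho> k 1)"
      using partI[OF r a g(1) g(2)[unfolded M_def] g(3), of 1 x0 "X 1"] x0 X1 by auto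
    have Xn: "dd \<rho> k a i - 3 / d \<le> nrm2 d (X i) \<and> nrm2 d (X i) < dd \<rho> k a i - 2 / d"
      if "i \<in> {1..k+1}" for i using XC[OF that] that by (auto simp: CC_def)
    have sep: "nrm2 d (X i) < nrm2 d (X j)" if "i \<in> {1..k+1}" "j \<in> {1..k+1}" "i < j" for i j
    proof -
      have "dd \<rho> k a j - dd \<rho> k a i \<ge> 2 / M" unfolding M_def
        using dd_gap[OF r a, of i j] that by auto
      then show ?thesis using Xn[OF that(1)] Xn[OF that(2)] g(4) by (simp add: field_simps)
    qed
    have inj: "inj_on X {1..k+1}"
    proof (rule inj_onI)
      fix i j assume ij: "i \<in> {1..k+1}" "j \<in> {1..k+1}" "X i = X j"
      show "i = j"
      proof (rule ccontr)
        assume "i \<noteq> j"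
        then have "i < j \<or> j < i" by auto
        then show False using sep ij by (metis less_irrefl)
      qed
    qed
    have W: "X i \<in> Wplus d" if "i \<in> {1..k+1}" for i
      using XC[OF that] that by (auto simp: CC_def Wplus_def)
    show "Gplus \<rho> k d S1 Srho x0"
      unfolding Gplus_def
    proof (intro exI conjI ballI)
      show "X i \<in> S1 \<inter> Wplus d" if "i \<in> {1..k}" for i using XS W that by auto
      show "X (k+1) \<in> Srho \<inter> Wplus d" using XS W by auto
      show "inj_on X {1..k+1}" by (rule inj)
      show "nrm d (X 1 - x0) < 1 + \<rho>" using XB1 by (simp add: Bd_def rr_def)
      show "nrm d (X (i + 1) - X i) < 2" if "i \<in> {1..k-1}" for i
      proof -
        have "i+1 \<in> {2..k+1}" using that by auto
        then have "X (i+1) \<in> Bd d (X i) (rr \<rho> k (i+1))" using XB by fastforce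
        moreover have "rr \<rho> k (i+1) = 2" using that by (auto simp: rr_def)
        ultimately show ?thesis by (simp add: Bd_def)
      qed
      show "nrm d (X (k + 1) - X k) < 1 + \<rho>"
      proof -
        have "k+1 \<in> {2..k+1}" using k1 by auto
        then have "X (k+1) \<in> Bd d (X k) (rr \<rho> k (k+1))" using XB by fastforce
        then show ?thesis by (simp add: Bd_def rr_def)
      qed
    qed
  qed
  show ?thesis using P1 P2 by blast
qed


end
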